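(* Let $\alpha,\beta,\gamma$ be independent random variables, and let $\hat\alpha,\hat\beta$ be random variables with the same distributions as $\alpha$ and $\beta$ respectively, such that $\alpha,\beta,\gamma,\hat\alpha,\hat\beta$ are mutually independent. Let $p(a|\beta,\gamma)$, $p(b|\alpha,\gamma)$, $p(c|\alpha,\beta)$ be arbitrary conditional distributions (response functions) with $a,b,c\in\{0,1\}$. Define $P_{obs}(a,b,c)=\mathbb E\,[p(a|\beta,\gamma)p(b|\alpha,\gamma)p(c|\alpha,\beta)]$, $P^{\beta}_{int}(a,b,c)=\mathbb E\,[p(a|\hat\beta,\gamma)p(b|\alpha,\gamma)p(c|\alpha,\beta)]$, $P^{\alpha}_{int}(a,b,c)=\mathbb E\,[p(a|\beta,\gamma)p(b|\hat\alpha,\gamma)p(c|\alpha,\beta)]$, $P^{\alpha\beta}_{int}(a,b,c)=\mathbb E\,[p(a|\hat\beta,\gamma)p(b|\hat\alpha,\gamma)p(c|\alpha,\beta)]$, the expectation being over $\alpha,\beta,\gamma,\hat\alpha,\hat\beta$. Set $E^1_{obs}=P_{obs}(a=b,c=1)-P_{obs}(a\neq b,c=1)$, $E^1_{\beta}=P^{\beta}_{int}(a=b,c=1)-P^{\beta}_{int}(a\neq b,c=1)$, $E^1_{\alpha}=P^{\alpha}_{int}(a=b,c=1)-P^{\alpha}_{int}(a\neq b,c=1)$, and $E_{\alpha\beta}=P^{\alpha\beta}_{int}(a=b)-P^{\alpha\beta}_{int}(a\neq b)$. Then $$S:=E_{\alpha\beta}\,P_{obs}(c=1)+2P_{obs}(c=1)-E^1_{obs}-E^1_{\alpha}-E^1_{\beta}\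 \ge\ 0.$$
   Context: This is the classical (local) triangle network with binary outputs: Alice's output $a$ depends on $(\beta,\gamma)$, Bob's $b$ on $(\alpha,\gamma)$, Charlie's $c$ on $(\alpha,\beta)$. The distributions $P^{\beta}_{int}$, $P^{\alpha}_{int}$, $P^{\alpha\beta}_{int}$ model "latent splitting" of the edges $\beta\to A$, $\alpha\to B$, or both: the affected party receives an independent copy of the source variable instead of the original one. Marginals such as $P(a=b,c=1)$ mean $\sum_{a=b}P(a,b,1)$. *)

theory Defs
  imports "HOL-Probability.Probability"
begin

text \<open>Joint sample space of (alpha, beta, gamma, alpha-hat, beta-hat): product of
  independent copies, alpha-hat distributed as alpha and beta-hat as beta.\<close>
definition Omega :: "'a measure \<Rightarrow> 'b measure \<Rightarrow> 'g measure \<Rightarrow> ('a \<times> 'b \<times> 'g \<times> 'a \<times> 'b) measure" where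
  "Omega A B G = A \<Otimes>\<^sub>M (B \<Otimes>\<^sub>M (G \<Otimes>\<^sub>M (A \<Otimes>\<^sub>M B)))"

text \<open>Response functions: pa a beta gamma = p(a|beta,gamma), pb b alpha gamma, pc c alpha beta.\<close>

definition Pobs :: "'a measure \<Rightarrow> 'b measure \<Rightarrow> 'g measure \<Rightarrow> (nat \<Rightarrow> 'b \<Rightarrow> 'g \<Rightarrow> real)
    \<Rightarrow> (nat \<Rightarrow> 'a \<Rightarrow> 'g \<Rightarrow> real) \<Rightarrow> (nat \<Rightarrow> 'a \<Rightarrow> 'b \<Rightarrow> real) \<Rightarrow> nat \<Rightarrow> nat \<Rightarrow> nat \<Rightarrow> real" where
  "Pobs A B G pa pb pc a b c =
     (\<integral>\<omega>. (case \<omega> of (x, y, z, x', y') \<Rightarrow> pa a y z * pb b x z * pc c x y) \<partial>Omega A B G)"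

definition Pint_beta :: "'a measure \<Rightarrow> 'b measure \<Rightarrow> 'g measure \<Rightarrow> (nat \<Rightarrow> 'b \<Rightarrow> 'g \<Rightarrow> real)
    \<Rightarrow> (nat \<Rightarrow> 'a \<Rightarrow> 'g \<Rightarrow> real) \<Rightarrow> (nat \<Rightarrow> 'a \<Rightarrow> 'b \<Rightarrow> real) \<Rightarrow> nat \<Rightarrow> nat \<Rightarrow> nat \<Rightarrow> real" where
  "Pint_beta A B G pa pb pc a b c =
     (\<integral>\<omega>. (case \<omega> of (x, y, z, x', y') \<Rightarrow> pa a y' z * pb b x z * pc c x y) \<partial>Omega A B G)"

definition Pint_alpha :: "'a measure \<Rightarrow> 'b measure \<Rightarrow> 'g measure \<Rightarrow> (nat \<Rightarrow> 'b \<Rightarrow> 'g \<Rightarrow> real)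
    \<Rightarrow> (nat \<Rightarrow> 'a \<Rightarrow> 'g \<Rightarrow> real) \<Rightarrow> (nat \<Rightarrow> 'a \<Rightarrow> 'b \<Rightarrow> real) \<Rightarrow> nat \<Rightarrow> nat \<Rightarrow> nat \<Rightarrow> real" where
  "Pint_alpha A B G pa pb pc a b c =
     (\<integral>\<omega>. (case \<omega> of (x, y, z, x', y') \<Rightarrow> pa a y z * pb b x' z * pc c x y) \<partial>Omega A B G)"

definition Pint_alphabeta :: "'a measure \<Rightarrow> 'b measure \<Rightarrow> 'g measure \<Rightarrow> (nat \<Rightarrow> 'b \<Rightarrow> 'g \<Rightarrow> real)
    \<Rightarrow> (nat \<Rightarrow> 'a \<Rightarrow> 'g \<Rightarrow> real) \<Rightarrow> (nat \<Rightarrow> 'a \<Rightarrow> 'b \<Rightarrow> real) \<Rightarrow> nat \<Rightarrow> nat \<Rightarrow> nat \<Rightarrow> real" where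
  "Pint_alphabeta A B G pa pb pc a b c =
     (\<integral>\<omega>. (case \<omega> of (x, y, z, x', y') \<Rightarrow> pa a y' z * pb b x' z * pc c x y) \<partial>Omega A B G)"

definition eq_c1 :: "(nat \<Rightarrow> nat \<Rightarrow> nat \<Rightarrow> real) \<Rightarrow> real" where
  "eq_c1 P = (\<Sum>a\<in>{0,1}. \<Sum>b\<in>{0,1}. if a = b then P a b 1 else 0)"
definition neq_c1 :: "(nat \<Rightarrow> nat \<Rightarrow> nat \<Rightarrow> real) \<Rightarrow> real" where
  "neq_c1 P = (\<Sum>a\<in>{0,1}. \<Sum>b\<in>{0,1}. if a \<noteq> b then P a b 1 else 0)"
definition c1 :: "(nat \<Rightarrow> nat \<Rightarrow> nat \<Rightarrow> real) \<Rightarrow> real" where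
  "c1 P = (\<Sum>a\<in>{0,1}. \<Sum>b\<in>{0,1}. P a b 1)"
definition eq_ab :: "(nat \<Rightarrow> nat \<Rightarrow> nat \<Rightarrow> real) \<Rightarrow> real" where
  "eq_ab P = (\<Sum>a\<in>{0,1}. \<Sum>b\<in>{0,1}. \<Sum>c\<in>{0,1}. if a = b then P a b c else 0)"
definition neq_ab :: "(nat \<Rightarrow> nat \<Rightarrow> nat \<Rightarrow> real) \<Rightarrow> real" where
  "neq_ab P = (\<Sum>a\<in>{0,1}. \<Sum>b\<in>{0,1}. \<Sum>c\<in>{0,1}. if a \<noteq> b then P a b c else 0)"

end

theory Submission
  imports Defs
begin


lemma indep_lemma:
  fixes C :: "'a \<Rightarrow> 'b \<Rightarrow> real" and F :: "'r \<Rightarrow> real"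
  assumes pA: "prob_space A" and pB: "prob_space B" and pR: "prob_space R"
    and Cm[measurable]: "(\<lambda>(x,y). C x y) \<in> borel_measurable (A \<Otimes>\<^sub>M B)"
    and Fm[measurable]: "F \<in> borel_measurable R"
    and Cb: "\<And>x y. x \<in> space A \<Longrightarrow> y \<in> space B \<Longrightarrow> \<bar>C x y\<bar> \<le> 1"
    and Fb: "\<And>r. r \<in> space R \<Longrightarrow> \<bar>F r\<bar> \<le> 1"
  shows "(\<integral>\<omega>. C (fst \<omega>) (fst (snd \<omega>)) * F (snd (snd \<omega>)) \<partial>(A \<Otimes>\<^sub>M (B \<Otimes>\<^sub>M R)))
       = (\<integral>\<omega>. C (fst \<omega>) (snd \<omega>) \<partial>(A \<Otimes>\<^sub>M B)) * integral\<^sup>L R F"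
proof -
  interpret pA: prob_space A by (rule pA)
  interpret pB: prob_space B by (rule pB)
  interpret pR: prob_space R by (rule pR)
  interpret BR: pair_prob_space B R by unfold_locales
  interpret AB: pair_prob_space A B by unfold_locales
  interpret ABR: pair_prob_space A "B \<Otimes>\<^sub>M R" by unfold_locales
  have Cm': "(\<lambda>\<omega>. C (fst \<omega>) (snd \<omega>)) \<in> borel_measurable (A \<Otimes>\<^sub>M B)"
    using Cm by (simp add: split_beta')
  have Cx[measurable]: "C x \<in> borel_measurable B" if "x \<in> space A" for x
    using measurable_Pair2[OF Cm' that] by simp
  have h_int: "integrable (A \<Otimes>\<^sub>M (B \<Otimes>\<^sub>M R)) (\<lambda>\<omega>. C (fst \<omega>) (fst (snd \<omega>)) * F (snd (snd \<omega>)))"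
  proof (rule ABR.P.integrable_const_bound[where B=1])
    show "AE x in A \<Otimes>\<^sub>M (B \<Otimes>\<^sub>M R). norm (C (fst x) (fst (snd x)) * F (snd (snd x))) \<le> 1"
      by (intro AE_I2) (auto simp: space_pair_measure abs_mult intro!: mult_le_one Cb Fb)
    show "(\<lambda>\<omega>. C (fst \<omega>) (fst (snd \<omega>)) * F (snd (snd \<omega>))) \<in> borel_measurable (A \<Otimes>\<^sub>M (B \<Otimes>\<^sub>M R))"
      using Cm' by measurable
  qed
  have "(\<integral>\<omega>. C (fst \<omega>) (fst (snd \<omega>)) * F (snd (snd \<omega>)) \<partial>(A \<Otimes>\<^sub>M (B \<Otimes>\<^sub>M R)))
      = (\<integral>x. (\<integral>u. C x (fst u) * F (snd u) \<partial>(B \<Otimes>\<^sub>M R)) \<partial>A)"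
    using ABR.integral_fst'[OF h_int] by simp
  also have "\<dots> = (\<integral>x. (\<integral>y. C x y \<partial>B) * integral\<^sup>L R F \<partial>A)"
  proof (rule Bochner_Integration.integral_cong)
    show "A = A" ..
  next
    fix x assume x: "x \<in> space A"
    have i: "integrable (B \<Otimes>\<^sub>M R) (\<lambda>u. C x (fst u) * F (snd u))"
    proof (rule BR.P.integrable_const_bound[where B=1])
      show "AE u in B \<Otimes>\<^sub>M R. norm (C x (fst u) * F (snd u)) \<le> 1"
        using x by (intro AE_I2) (auto simp: space_pair_measure abs_mult intro!: mult_le_one Cb Fb)
      show "(\<lambda>u. C x (fst u) * F (snd u)) \<in> borel_measurable (B \<Otimes>\<^sub>M R)"
        using Cx[OF x] by measurable
    qed
    have "(\<integral>u. C x (fst u) * F (snd u) \<partial>(B \<Otimes>\<^sub>M R)) = (\<integral>y. (\<integral>r. C x y * F r \<partial>R) \<partial>B)"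
      using BR.integral_fst'[OF i] by simp
    also have "\<dots> = (\<integral>y. C x y * integral\<^sup>L R F \<partial>B)"
      by simp
    also have "\<dots> = (\<integral>y. C x y \<partial>B) * integral\<^sup>L R F"
      by simp
    finally show "(\<integral>u. C x (fst u) * F (snd u) \<partial>(B \<Otimes>\<^sub>M R)) = (\<integral>y. C x y \<partial>B) * integral\<^sup>L R F" .
  qed
  also have "\<dots> = (\<integral>x. (\<integral>y. C x y \<partial>B) \<partial>A) * integral\<^sup>L R F"
    by simp
  also have "(\<integral>x. (\<integral>y. C x y \<partial>B) \<partial>A) = (\<integral>\<omega>. C (fst \<omega>) (snd \<omega>) \<partial>(A \<Otimes>\<^sub>M B))"
  proof -
    have i: "integrable (A \<Otimes>\<^sub>M B) (\<lambda>\<omega>. C (fst \<omega>) (snd \<omega>))"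
    proof (rule AB.P.integrable_const_bound[where B=1])
      show "AE u in A \<Otimes>\<^sub>M B. norm (C (fst u) (snd u)) \<le> 1"
        by (intro AE_I2) (auto simp: space_pair_measure intro!: Cb)
    qed (rule Cm')
    show ?thesis using AB.integral_fst'[OF i] by simp
  qed
  finally show ?thesis .
qed



lemma lin4: "integrable M f1 \<Longrightarrow> integrable M f2 \<Longrightarrow> integrable M f3 \<Longrightarrow> integrable M f4 \<Longrightarrow>
  integral\<^sup>L M f1 + integral\<^sup>L M f2 - integral\<^sup>L M f3 - integral\<^sup>L M f4 = (\<integral>x. f1 x + f2 x - f3 x - f4 x \<partial>M)"
  for f1 f2 f3 f4 :: "_ \<Rightarrow> real"
  by (simp add: Bochner_Integration.integral_add Bochner_Integration.integral_diff)

lemma add4: "integrable M f1 \<Longrightarrow> integrable M f2 \<Longrightarrow> integrable M f3 \<Longrightarrow> integrable M f4 \<Longrightarrow>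
  integral\<^sup>L M f1 + integral\<^sup>L M f2 + integral\<^sup>L M f3 + integral\<^sup>L M f4 = (\<integral>x. f1 x + f2 x + f3 x + f4 x \<partial>M)"
  for f1 f2 f3 f4 :: "_ \<Rightarrow> real"
  by (simp add: Bochner_Integration.integral_add)

lemma poly4: "(a0::real) + a1 = 1 \<Longrightarrow> b0 + b1 = 1 \<Longrightarrow> a0*b0*c + a0*b1*c + a1*b0*c + a1*b1*c = c"
proof -
  assume "a0 + a1 = 1" "b0 + b1 = 1"
  moreover have "a0*b0*c + a0*b1*c + a1*b0*c + a1*b1*c = (a0+a1)*(b0+b1)*c" by (simp add: algebra_simps)
  ultimately show ?thesis by simp
qed

lemma generic:
  fixes M :: "'w measure" and A :: "'a measure" and B :: "'b measure" and G :: "'g measure"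
    and pa :: "nat \<Rightarrow> 'b \<Rightarrow> 'g \<Rightarrow> real"
    and pb :: "nat \<Rightarrow> 'a \<Rightarrow> 'g \<Rightarrow> real"
    and pc :: "nat \<Rightarrow> 'a \<Rightarrow> 'b \<Rightarrow> real"
    and P :: "nat \<Rightarrow> nat \<Rightarrow> nat \<Rightarrow> real"
  assumes pM: "prob_space M"
    and ma: "\<And>a. a \<in> {0,1} \<Longrightarrow> (\<lambda>(y, z). pa a y z) \<in> borel_measurable (B \<Otimes>\<^sub>M G)"
    and mb: "\<And>b. b \<in> {0,1} \<Longrightarrow> (\<lambda>(x, z). pb b x z) \<in> borel_measurable (A \<Otimes>\<^sub>M G)"
    and mc: "\<And>c. c \<in> {0,1} \<Longrightarrow> (\<lambda>(x, y). pc c x y) \<in> borel_measurable (A \<Otimes>\<^sub>M B)"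
    and a0: "\<And>a y z. a \<in> {0,1} \<Longrightarrow> y \<in> space B \<Longrightarrow> z \<in> space G \<Longrightarrow> 0 \<le> pa a y z"
    and a1: "\<And>y z. y \<in> space B \<Longrightarrow> z \<in> space G \<Longrightarrow> pa 0 y z + pa 1 y z = 1"
    and b0: "\<And>b x z. b \<in> {0,1} \<Longrightarrow> x \<in> space A \<Longrightarrow> z \<in> space G \<Longrightarrow> 0 \<le> pb b x z"
    and b1: "\<And>x z. x \<in> space A \<Longrightarrow> z \<in> space G \<Longrightarrow> pb 0 x z + pb 1 x z = 1"
    and c0: "\<And>c x y. c \<in> {0,1} \<Longrightarrow> x \<in> space A \<Longrightarrow> y \<in> space B \<Longrightarrow> 0 \<le> pc c x y"
    and c1: "\<And>x y. x \<in> space A \<Longrightarrow> y \<in> space B \<Longrightarrow> pc 0 x y + pc 1 x y = 1"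
    and mXf[measurable]: "Xf \<in> measurable M A" and mYf[measurable]: "Yf \<in> measurable M B"
    and mZf[measurable]: "Zf \<in> measurable M G"
    and mX[measurable]: "X \<in> measurable M A" and mY[measurable]: "Y \<in> measurable M B"
    and P: "\<And>a b c. P a b c = (\<integral>\<omega>. pa a (Yf \<omega>) (Zf \<omega>) * pb b (Xf \<omega>) (Zf \<omega>) * pc c (X \<omega>) (Y \<omega>) \<partial>M)"
  shows "eq_c1 P - neq_c1 P = (\<integral>\<omega>. (pa 0 (Yf \<omega>) (Zf \<omega>) - pa 1 (Yf \<omega>) (Zf \<omega>)) *
            (pb 0 (Xf \<omega>) (Zf \<omega>) - pb 1 (Xf \<omega>) (Zf \<omega>)) * pc 1 (X \<omega>) (Y \<omega>) \<partial>M)"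
    and "eq_ab P - neq_ab P = (\<integral>\<omega>. (pa 0 (Yf \<omega>) (Zf \<omega>) - pa 1 (Yf \<omega>) (Zf \<omega>)) *
            (pb 0 (Xf \<omega>) (Zf \<omega>) - pb 1 (Xf \<omega>) (Zf \<omega>)) \<partial>M)"
    and "c1 P = (\<integral>\<omega>. pc 1 (X \<omega>) (Y \<omega>) \<partial>M)"
    and "integrable M (\<lambda>\<omega>. (pa 0 (Yf \<omega>) (Zf \<omega>) - pa 1 (Yf \<omega>) (Zf \<omega>)) *
            (pb 0 (Xf \<omega>) (Zf \<omega>) - pb 1 (Xf \<omega>) (Zf \<omega>)) * pc 1 (X \<omega>) (Y \<omega>))"
    and "integrable M (\<lambda>\<omega>. pc 1 (X \<omega>) (Y \<omega>))"
proof -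
  interpret prob_space M by (rule pM)
  have sp: "Xf \<omega> \<in> space A" "Yf \<omega> \<in> space B" "Zf \<omega> \<in> space G" "X \<omega> \<in> space A" "Y \<omega> \<in> space B"
    if "\<omega> \<in> space M" for \<omega>
    using that measurable_space[OF mXf] measurable_space[OF mYf] measurable_space[OF mZf]
      measurable_space[OF mX] measurable_space[OF mY] by auto
  have ra: "0 \<le> pa a y z \<and> pa a y z \<le> 1" if "a \<in> {0,1}" "y \<in> space B" "z \<in> space G" for a y z
    using that a0[of 0 y z] a0[of 1 y z] a1[of y z] by auto
  have rb: "0 \<le> pb b x z \<and> pb b x z \<le> 1" if "b \<in> {0,1}" "x \<in> space A" "z \<in> space G" for b x z
    using that b0[of 0 x z] b0[of 1 x z] b1[of x z] by auto
  have rc: "0 \<le> pc c x y \<and> pc c x y \<le> 1" if "c \<in> {0,1}" "x \<in> space A" "y \<in> space B" for c x y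
    using that c0[of 0 x y] c0[of 1 x y] c1[of x y] by auto
  have mpa: "(\<lambda>\<omega>. pa a (Yf \<omega>) (Zf \<omega>)) \<in> borel_measurable M" if "a \<in> {0,1}" for a
    by (rule measurable_Pair_compose_split[OF ma[OF that] mYf mZf])
  have mpb: "(\<lambda>\<omega>. pb b (Xf \<omega>) (Zf \<omega>)) \<in> borel_measurable M" if "b \<in> {0,1}" for b
    by (rule measurable_Pair_compose_split[OF mb[OF that] mXf mZf])
  have mpc: "(\<lambda>\<omega>. pc c (X \<omega>) (Y \<omega>)) \<in> borel_measurable M" if "c \<in> {0,1}" for c
    by (rule measurable_Pair_compose_split[OF mc[OF that] mX mY])
  have iT: "integrable M (\<lambda>\<omega>. pa a (Yf \<omega>) (Zf \<omega>) * pb b (Xf \<omega>) (Zf \<omega>) * pc c (X \<omega>) (Y \<omega>))"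
    if "a \<in> {0,1}" "b \<in> {0,1}" "c \<in> {0,1}" for a b c
  proof (rule integrable_const_bound[where B=1])
    show "AE x in M. norm (pa a (Yf x) (Zf x) * pb b (Xf x) (Zf x) * pc c (X x) (Y x)) \<le> 1"
    proof (intro AE_I2)
      fix x assume x: "x \<in> space M"
      show "norm (pa a (Yf x) (Zf x) * pb b (Xf x) (Zf x) * pc c (X x) (Y x)) \<le> 1"
        using ra[OF that(1) sp(2,3)[OF x]] rb[OF that(2) sp(1,3)[OF x]] rc[OF that(3) sp(4,5)[OF x]]
        by (auto simp: abs_mult intro!: mult_le_one)
    qed
    show "(\<lambda>x. pa a (Yf x) (Zf x) * pb b (Xf x) (Zf x) * pc c (X x) (Y x)) \<in> borel_measurable M"
      using mpa[OF that(1)] mpb[OF that(2)] mpc[OF that(3)] by measurable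
  qed
  have iS: "integrable M (\<lambda>\<omega>. pa a (Yf \<omega>) (Zf \<omega>) * pb b (Xf \<omega>) (Zf \<omega>))"
    if "a \<in> {0,1}" "b \<in> {0,1}" for a b
  proof (rule integrable_const_bound[where B=1])
    show "AE x in M. norm (pa a (Yf x) (Zf x) * pb b (Xf x) (Zf x)) \<le> 1"
    proof (intro AE_I2)
      fix x assume x: "x \<in> space M"
      show "norm (pa a (Yf x) (Zf x) * pb b (Xf x) (Zf x)) \<le> 1"
        using ra[OF that(1) sp(2,3)[OF x]] rb[OF that(2) sp(1,3)[OF x]]
        by (auto simp: abs_mult intro!: mult_le_one)
    qed
    show "(\<lambda>x. pa a (Yf x) (Zf x) * pb b (Xf x) (Zf x)) \<in> borel_measurable M"
      using mpa[OF that(1)] mpb[OF that(2)] by measurable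
  qed
  have S: "P a b 0 + P a b 1 = (\<integral>\<omega>. pa a (Yf \<omega>) (Zf \<omega>) * pb b (Xf \<omega>) (Zf \<omega>) \<partial>M)"
    if "a \<in> {0,1}" "b \<in> {0,1}" for a b
    unfolding P
    apply (subst Bochner_Integration.integral_add[symmetric])
      apply (rule iT; use that in simp)
     apply (rule iT; use that in simp)
    apply (rule Bochner_Integration.integral_cong[OF refl])
    using c1 sp by (simp add: distrib_left[symmetric])
  show "eq_c1 P - neq_c1 P = (\<integral>\<omega>. (pa 0 (Yf \<omega>) (Zf \<omega>) - pa 1 (Yf \<omega>) (Zf \<omega>)) *
            (pb 0 (Xf \<omega>) (Zf \<omega>) - pb 1 (Xf \<omega>) (Zf \<omega>)) * pc 1 (X \<omega>) (Y \<omega>) \<partial>M)"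
  proof -
    have eq: "eq_c1 P - neq_c1 P = P 0 0 1 + P 1 1 1 - P 0 1 1 - P 1 0 1"
      unfolding eq_c1_def neq_c1_def by simp
    show ?thesis
      apply (subst eq) apply (simp only: P)
      apply (subst lin4[OF iT[of 0 0 1] iT[of 1 1 1] iT[of 0 1 1] iT[of 1 0 1]]; (simp; fail)?)
      apply (rule Bochner_Integration.integral_cong[OF refl])
      by (simp_all add: algebra_simps)
  qed
  show "eq_ab P - neq_ab P = (\<integral>\<omega>. (pa 0 (Yf \<omega>) (Zf \<omega>) - pa 1 (Yf \<omega>) (Zf \<omega>)) *
            (pb 0 (Xf \<omega>) (Zf \<omega>) - pb 1 (Xf \<omega>) (Zf \<omega>)) \<partial>M)"
  proof -
    have eq: "eq_ab P - neq_ab P = (P 0 0 0 + P 0 0 1) + (P 1 1 0 + P 1 1 1) - (P 0 1 0 + P 0 1 1) - (P 1 0 0 + P 1 0 1)"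
      unfolding eq_ab_def neq_ab_def by simp
    show ?thesis
      apply (subst eq) apply ((subst S; (simp; fail)?)+)
      apply (subst lin4[OF iS[of 0 0] iS[of 1 1] iS[of 0 1] iS[of 1 0]]; (simp; fail)?)
      apply (rule Bochner_Integration.integral_cong[OF refl])
      by (simp_all add: algebra_simps)
  qed
  show "c1 P = (\<integral>\<omega>. pc 1 (X \<omega>) (Y \<omega>) \<partial>M)"
  proof -
    have eq: "c1 P = P 0 0 1 + P 0 1 1 + P 1 0 1 + P 1 1 1"
      unfolding c1_def by simp
    show ?thesis
      apply (subst eq) apply (simp only: P)
      apply (subst add4[OF iT[of 0 0 1] iT[of 0 1 1] iT[of 1 0 1] iT[of 1 1 1]]; (simp; fail)?)
      apply (rule Bochner_Integration.integral_cong[OF refl])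
      by (rule poly4[OF a1 b1]; rule sp; assumption)
  qed
  show "integrable M (\<lambda>\<omega>. (pa 0 (Yf \<omega>) (Zf \<omega>) - pa 1 (Yf \<omega>) (Zf \<omega>)) *
            (pb 0 (Xf \<omega>) (Zf \<omega>) - pb 1 (Xf \<omega>) (Zf \<omega>)) * pc 1 (X \<omega>) (Y \<omega>))"
  proof (rule integrable_const_bound[where B=1])
    show "AE x in M. norm ((pa 0 (Yf x) (Zf x) - pa 1 (Yf x) (Zf x)) *
            (pb 0 (Xf x) (Zf x) - pb 1 (Xf x) (Zf x)) * pc 1 (X x) (Y x)) \<le> 1"
    proof (intro AE_I2)
      fix x assume x: "x \<in> space M"
      have h1: "\<bar>pa 0 (Yf x) (Zf x) - pa 1 (Yf x) (Zf x)\<bar> \<le> 1"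
        using ra[of 0, OF _ sp(2,3)[OF x]] ra[of 1, OF _ sp(2,3)[OF x]] by auto
      have h2: "\<bar>pb 0 (Xf x) (Zf x) - pb 1 (Xf x) (Zf x)\<bar> \<le> 1"
        using rb[of 0, OF _ sp(1,3)[OF x]] rb[of 1, OF _ sp(1,3)[OF x]] by auto
      have h3: "\<bar>pc 1 (X x) (Y x)\<bar> \<le> 1"
        using rc[of 1, OF _ sp(4,5)[OF x]] by auto
      show "norm ((pa 0 (Yf x) (Zf x) - pa 1 (Yf x) (Zf x)) *
            (pb 0 (Xf x) (Zf x) - pb 1 (Xf x) (Zf x)) * pc 1 (X x) (Y x)) \<le> 1"
        using h1 h2 h3 by (auto simp: abs_mult intro!: mult_le_one)
    qed
    show "(\<lambda>x. (pa 0 (Yf x) (Zf x) - pa 1 (Yf x) (Zf x)) *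
            (pb 0 (Xf x) (Zf x) - pb 1 (Xf x) (Zf x)) * pc 1 (X x) (Y x)) \<in> borel_measurable M"
      using mpa[of 0] mpa[of 1] mpb[of 0] mpb[of 1] mpc[of 1] by simp
  qed
  show "integrable M (\<lambda>\<omega>. pc 1 (X \<omega>) (Y \<omega>))"
  proof (rule integrable_const_bound[where B=1])
    show "AE x in M. norm (pc 1 (X x) (Y x)) \<le> 1"
      using rc[of 1, OF _ sp(4,5)] by (intro AE_I2) auto
  qed (rule mpc, simp)
qed


lemma abs_bd: "\<bar>a\<bar> \<le> 1 \<Longrightarrow> (a::real) * x \<le> \<bar>x\<bar>"
proof -
  assume h: "\<bar>a\<bar> \<le> 1"
  have "a * x \<le> \<bar>a * x\<bar>" by simp
  also have "\<dots> = \<bar>a\<bar> * \<bar>x\<bar>" by (rule abs_mult)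
  also have "\<dots> \<le> 1 * \<bar>x\<bar>" by (rule mult_right_mono[OF h]) simp
  finally show ?thesis by simp
qed

lemma chsh:
  fixes a a' b b' c :: real
  assumes "\<bar>a\<bar> \<le> 1" "\<bar>a'\<bar> \<le> 1" "\<bar>b\<bar> \<le> 1" "\<bar>b'\<bar> \<le> 1" "0 \<le> c"
  shows "0 \<le> c * (a' * b' + 2 - a * b - a' * b - a * b')"
proof -
  have e: "a' * b' + 2 - a * b - a' * b - a * b' = 2 - a * (b + b') - a' * (b - b')"
    by (simp add: algebra_simps)
  have "a * (b + b') \<le> \<bar>b + b'\<bar>" by (rule abs_bd[OF assms(1)])
  moreover have "a' * (b - b') \<le> \<bar>b - b'\<bar>" by (rule abs_bd[OF assms(2)])
  moreover have "\<bar>b + b'\<bar> + \<bar>b - b'\<bar> \<le> 2" using assms(3,4) by arith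
  ultimately show ?thesis using assms(5) e by simp
qed

lemma lin5: "integrable M f1 \<Longrightarrow> integrable M f2 \<Longrightarrow> integrable M f3 \<Longrightarrow> integrable M f4 \<Longrightarrow> integrable M f5 \<Longrightarrow>
  integral\<^sup>L M f1 + 2 * integral\<^sup>L M f2 - integral\<^sup>L M f3 - integral\<^sup>L M f4 - integral\<^sup>L M f5
   = (\<integral>x. f1 x + 2 * f2 x - f3 x - f4 x - f5 x \<partial>M)"
  for f1 f2 f3 f4 f5 :: "_ \<Rightarrow> real"
  by (simp add: Bochner_Integration.integral_add Bochner_Integration.integral_diff)

theorem mainTheorem2:
  fixes A :: "'a measure" and B :: "'b measure" and G :: "'g measure"
    and pa :: "nat \<Rightarrow> 'b \<Rightarrow> 'g \<Rightarrow> real"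
    and pb :: "nat \<Rightarrow> 'a \<Rightarrow> 'g \<Rightarrow> real"
    and pc :: "nat \<Rightarrow> 'a \<Rightarrow> 'b \<Rightarrow> real"
  assumes "prob_space A" and "prob_space B" and "prob_space G"
    and "\<And>a. a \<in> {0,1} \<Longrightarrow> (\<lambda>(y, z). pa a y z) \<in> borel_measurable (B \<Otimes>\<^sub>M G)"
    and "\<And>b. b \<in> {0,1} \<Longrightarrow> (\<lambda>(x, z). pb b x z) \<in> borel_measurable (A \<Otimes>\<^sub>M G)"
    and "\<And>c. c \<in> {0,1} \<Longrightarrow> (\<lambda>(x, y). pc c x y) \<in> borel_measurable (A \<Otimes>\<^sub>M B)"
    and "\<And>a y z. a \<in> {0,1} \<Longrightarrow> y \<in> space B \<Longrightarrow> z \<in> space G \<Longrightarrow> 0 \<le> pa a y z"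
    and "\<And>y z. y \<in> space B \<Longrightarrow> z \<in> space G \<Longrightarrow> pa 0 y z + pa 1 y z = 1"
    and "\<And>b x z. b \<in> {0,1} \<Longrightarrow> x \<in> space A \<Longrightarrow> z \<in> space G \<Longrightarrow> 0 \<le> pb b x z"
    and "\<And>x z. x \<in> space A \<Longrightarrow> z \<in> space G \<Longrightarrow> pb 0 x z + pb 1 x z = 1"
    and "\<And>c x y. c \<in> {0,1} \<Longrightarrow> x \<in> space A \<Longrightarrow> y \<in> space B \<Longrightarrow> 0 \<le> pc c x y"
    and "\<And>x y. x \<in> space A \<Longrightarrow> y \<in> space B \<Longrightarrow> pc 0 x y + pc 1 x y = 1"
  shows
    "(let Po = Pobs A B G pa pb pc; Pb = Pint_beta A B G pa pb pc;
          Pa = Pint_alpha A B G pa pb pc; Pab = Pint_alphabeta A B G pa pb pc;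
          E1obs = eq_c1 Po - neq_c1 Po; E1b = eq_c1 Pb - neq_c1 Pb;
          E1a = eq_c1 Pa - neq_c1 Pa; Eab = eq_ab Pab - neq_ab Pab
      in Eab * c1 Po + 2 * c1 Po - E1obs - E1a - E1b) \<ge> 0"
  proof -
  interpret pA: prob_space A by (rule assms(1))
  interpret pB: prob_space B by (rule assms(2))
  interpret pG: prob_space G by (rule assms(3))
  have pR: "prob_space (G \<Otimes>\<^sub>M (A \<Otimes>\<^sub>M B))"
    by (intro prob_space_pair assms(1-3))
  have pO: "prob_space (Omega A B G)"
    unfolding Omega_def by (intro prob_space_pair assms(1-3))
  have mX: "(\<lambda>\<omega>. fst \<omega>) \<in> measurable (Omega A B G) A"
    and mY: "(\<lambda>\<omega>. fst (snd \<omega>)) \<in> measurable (Omega A B G) B"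
    and mZ: "(\<lambda>\<omega>. fst (snd (snd \<omega>))) \<in> measurable (Omega A B G) G"
    and mX': "(\<lambda>\<omega>. fst (snd (snd (snd \<omega>)))) \<in> measurable (Omega A B G) A"
    and mY': "(\<lambda>\<omega>. snd (snd (snd (snd \<omega>)))) \<in> measurable (Omega A B G) B"
    unfolding Omega_def by measurable
  have eo: "\<And>a b c. Pobs A B G pa pb pc a b c = (\<integral>\<omega>. pa a (fst (snd \<omega>)) (fst (snd (snd \<omega>))) *
      pb b (fst \<omega>) (fst (snd (snd \<omega>))) * pc c (fst \<omega>) (fst (snd \<omega>)) \<partial>Omega A B G)"
    unfolding Pobs_def by (simp add: case_prod_unfold)
  have eb: "\<And>a b c. Pint_beta A B G pa pb pc a b c = (\<integral>\<omega>. pa a (snd (snd (snd (snd \<omega>)))) (fst (snd (snd \<omega>))) *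
      pb b (fst \<omega>) (fst (snd (snd \<omega>))) * pc c (fst \<omega>) (fst (snd \<omega>)) \<partial>Omega A B G)"
    unfolding Pint_beta_def by (simp add: case_prod_unfold)
  have ea: "\<And>a b c. Pint_alpha A B G pa pb pc a b c = (\<integral>\<omega>. pa a (fst (snd \<omega>)) (fst (snd (snd \<omega>))) *
      pb b (fst (snd (snd (snd \<omega>)))) (fst (snd (snd \<omega>))) * pc c (fst \<omega>) (fst (snd \<omega>)) \<partial>Omega A B G)"
    unfolding Pint_alpha_def by (simp add: case_prod_unfold)
  have eab: "\<And>a b c. Pint_alphabeta A B G pa pb pc a b c = (\<integral>\<omega>. pa a (snd (snd (snd (snd \<omega>)))) (fst (snd (snd \<omega>))) *
      pb b (fst (snd (snd (snd \<omega>)))) (fst (snd (snd \<omega>))) * pc c (fst \<omega>) (fst (snd \<omega>)) \<partial>Omega A B G)"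
    unfolding Pint_alphabeta_def by (simp add: case_prod_unfold)
  note go = generic[OF pO assms(4-12) mX mY mZ mX mY eo]
  note gb = generic[OF pO assms(4-12) mX mY' mZ mX mY eb]
  note ga = generic[OF pO assms(4-12) mX' mY mZ mX mY ea]
  note gab = generic[OF pO assms(4-12) mX' mY' mZ mX mY eab]
  define F where "F = (\<lambda>r::'g \<times> 'a \<times> 'b. (pa 0 (snd (snd r)) (fst r) - pa 1 (snd (snd r)) (fst r)) *
      (pb 0 (fst (snd r)) (fst r) - pb 1 (fst (snd r)) (fst r)))"
  have [measurable]: "(\<lambda>(y,z). pa 0 y z) \<in> borel_measurable (B \<Otimes>\<^sub>M G)"
    "(\<lambda>(y,z). pa 1 y z) \<in> borel_measurable (B \<Otimes>\<^sub>M G)"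
    "(\<lambda>(x,z). pb 0 x z) \<in> borel_measurable (A \<Otimes>\<^sub>M G)"
    "(\<lambda>(x,z). pb 1 x z) \<in> borel_measurable (A \<Otimes>\<^sub>M G)"
    "(\<lambda>(x,y). pc 1 x y) \<in> borel_measurable (A \<Otimes>\<^sub>M B)"
    using assms(4-6) by auto
  have mF: "F \<in> borel_measurable (G \<Otimes>\<^sub>M (A \<Otimes>\<^sub>M B))"
    unfolding F_def by measurable
  have m1: "(\<lambda>r::'g \<times> 'a \<times> 'b. 1::real) \<in> borel_measurable (G \<Otimes>\<^sub>M (A \<Otimes>\<^sub>M B))" by simp
  have mc1: "(\<lambda>(x,y). pc 1 x y) \<in> borel_measurable (A \<Otimes>\<^sub>M B)" using assms(6) by simp
  have m1': "(\<lambda>(x::'a,y::'b). 1::real) \<in> borel_measurable (A \<Otimes>\<^sub>M B)" by simp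
  have bA: "\<bar>pa 0 y z - pa 1 y z\<bar> \<le> 1" if "y \<in> space B" "z \<in> space G" for y z
    using assms(7)[of 0 y z] assms(7)[of 1 y z] assms(8)[of y z] that by auto
  have bB: "\<bar>pb 0 x z - pb 1 x z\<bar> \<le> 1" if "x \<in> space A" "z \<in> space G" for x z
    using assms(9)[of 0 x z] assms(9)[of 1 x z] assms(10)[of x z] that by auto
  have bC: "\<bar>pc 1 x y\<bar> \<le> 1" if "x \<in> space A" "y \<in> space B" for x y
    using assms(11)[of 0 x y] assms(11)[of 1 x y] assms(12)[of x y] that by auto
  have bF: "\<bar>F r\<bar> \<le> 1" if "r \<in> space (G \<Otimes>\<^sub>M (A \<Otimes>\<^sub>M B))" for r
  proof -
    obtain z x y where r: "r = (z, x, y)" by (cases r) auto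
    with that have sp: "z \<in> space G" "x \<in> space A" "y \<in> space B"
      by (auto simp: space_pair_measure)
    have "\<bar>(pa 0 y z - pa 1 y z) * (pb 0 x z - pb 1 x z)\<bar> \<le> 1"
      unfolding abs_mult by (rule mult_le_one[OF bA[OF sp(3,1)] abs_ge_zero bB[OF sp(2,1)]])
    then show ?thesis unfolding F_def r by simp
  qed
  have I1: "(\<integral>\<omega>. pc 1 (fst \<omega>) (fst (snd \<omega>)) * F (snd (snd \<omega>)) \<partial>Omega A B G)
     = (\<integral>\<omega>. pc 1 (fst \<omega>) (snd \<omega>) \<partial>(A \<Otimes>\<^sub>M B)) * integral\<^sup>L (G \<Otimes>\<^sub>M (A \<Otimes>\<^sub>M B)) F"
    unfolding Omega_def by (rule indep_lemma[OF assms(1,2) pR mc1 mF bC bF])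
  have I2: "(\<integral>\<omega>. pc 1 (fst \<omega>) (fst (snd \<omega>)) * 1 \<partial>Omega A B G)
     = (\<integral>\<omega>. pc 1 (fst \<omega>) (snd \<omega>) \<partial>(A \<Otimes>\<^sub>M B)) * (\<integral>r. 1 \<partial>(G \<Otimes>\<^sub>M (A \<Otimes>\<^sub>M B)))"
    unfolding Omega_def by (rule indep_lemma[OF assms(1,2) pR mc1 m1 bC]) simp_all
  have I3: "(\<integral>\<omega>. 1 * F (snd (snd \<omega>)) \<partial>Omega A B G)
     = (\<integral>\<omega>. 1 \<partial>(A \<Otimes>\<^sub>M B)) * integral\<^sup>L (G \<Otimes>\<^sub>M (A \<Otimes>\<^sub>M B)) F"
    unfolding Omega_def by (rule indep_lemma[OF assms(1,2) pR m1' mF _ bF]) simp_all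
  interpret pR: prob_space "G \<Otimes>\<^sub>M (A \<Otimes>\<^sub>M B)" by (rule pR)
  interpret pAB: prob_space "A \<Otimes>\<^sub>M B" by (intro prob_space_pair assms(1-2))
  interpret pO: prob_space "Omega A B G" by (rule pO)
  have K: "(\<integral>\<omega>. F (snd (snd \<omega>)) \<partial>Omega A B G) * (\<integral>\<omega>. pc 1 (fst \<omega>) (fst (snd \<omega>)) \<partial>Omega A B G)
     = (\<integral>\<omega>. pc 1 (fst \<omega>) (fst (snd \<omega>)) * F (snd (snd \<omega>)) \<partial>Omega A B G)"
    using I1 I2 I3 by (simp add: pR.prob_space pAB.prob_space)
  have KK: "(\<integral>\<omega>. (pa 0 (snd (snd (snd (snd \<omega>)))) (fst (snd (snd \<omega>))) - pa 1 (snd (snd (snd (snd \<omega>)))) (fst (snd (snd \<omega>)))) * (pb 0 (fst (snd (snd (snd \<omega>)))) (fst (snd (snd \<omega>))) - pb 1 (fst (snd (snd (snd \<omega>)))) (fst (snd (snd \<omega>)))) \<partial>Omega A B G) * (\<integral>\<omega>. pc 1 (fst \<omega>) (fst (snd \<omega>)) \<partial>Omega A B G)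
      = (\<integral>\<omega>. (pa 0 (snd (snd (snd (snd \<omega>)))) (fst (snd (snd \<omega>))) - pa 1 (snd (snd (snd (snd \<omega>)))) (fst (snd (snd \<omega>)))) * (pb 0 (fst (snd (snd (snd \<omega>)))) (fst (snd (snd \<omega>))) - pb 1 (fst (snd (snd (snd \<omega>)))) (fst (snd (snd \<omega>)))) * pc 1 (fst \<omega>) (fst (snd \<omega>)) \<partial>Omega A B G)"
    using K unfolding F_def by (simp add: mult.commute mult.left_commute)
  have L: "(\<integral>\<omega>. (pa 0 (snd (snd (snd (snd \<omega>)))) (fst (snd (snd \<omega>))) - pa 1 (snd (snd (snd (snd \<omega>)))) (fst (snd (snd \<omega>)))) * (pb 0 (fst (snd (snd (snd \<omega>)))) (fst (snd (snd \<omega>))) - pb 1 (fst (snd (snd (snd \<omega>)))) (fst (snd (snd \<omega>)))) * pc 1 (fst \<omega>) (fst (snd \<omega>)) \<partial>Omega A B G) + 2 * (\<integral>\<omega>. pc 1 (fst \<omega>) (fst (snd \<omega>)) \<partial>Omega A B G)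
     - (\<integral>\<omega>. (pa 0 (fst (snd \<omega>)) (fst (snd (snd \<omega>))) - pa 1 (fst (snd \<omega>)) (fst (snd (snd \<omega>)))) * (pb 0 (fst \<omega>) (fst (snd (snd \<omega>))) - pb 1 (fst \<omega>) (fst (snd (snd \<omega>)))) * pc 1 (fst \<omega>) (fst (snd \<omega>)) \<partial>Omega A B G) - (\<integral>\<omega>. (pa 0 (fst (snd \<omega>)) (fst (snd (snd \<omega>))) - pa 1 (fst (snd \<omega>)) (fst (snd (snd \<omega>)))) * (pb 0 (fst (snd (snd (snd \<omega>)))) (fst (snd (snd \<omega>))) - pb 1 (fst (snd (snd (snd \<omega>)))) (fst (snd (snd \<omega>)))) * pc 1 (fst \<omega>) (fst (snd \<omega>)) \<partial>Omega A B G)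
     - (\<integral>\<omega>. (pa 0 (snd (snd (snd (snd \<omega>)))) (fst (snd (snd \<omega>))) - pa 1 (snd (snd (snd (snd \<omega>)))) (fst (snd (snd \<omega>)))) * (pb 0 (fst \<omega>) (fst (snd (snd \<omega>))) - pb 1 (fst \<omega>) (fst (snd (snd \<omega>)))) * pc 1 (fst \<omega>) (fst (snd \<omega>)) \<partial>Omega A B G)
     = (\<integral>\<omega>. (pa 0 (snd (snd (snd (snd \<omega>)))) (fst (snd (snd \<omega>))) - pa 1 (snd (snd (snd (snd \<omega>)))) (fst (snd (snd \<omega>)))) * (pb 0 (fst (snd (snd (snd \<omega>)))) (fst (snd (snd \<omega>))) - pb 1 (fst (snd (snd (snd \<omega>)))) (fst (snd (snd \<omega>)))) * pc 1 (fst \<omega>) (fst (snd \<omega>)) + 2 * (pc 1 (fst \<omega>) (fst (snd \<omega>))) - (pa 0 (fst (snd \<omega>)) (fst (snd (snd \<omega>))) - pa 1 (fst (snd \<omega>)) (fst (snd (snd \<omega>)))) * (pb 0 (fst \<omega>) (fst (snd (snd \<omega>))) - pb 1 (fst \<omega>) (fst (snd (snd \<omega>)))) * pc 1 (fst \<omega>) (fst (snd \<omega>)) - (pa 0 (fst (snd \<omega>)) (fst (snd (snd \<omega>))) - pa 1 (fst (snd \<omega>)) (fst (snd (snd \<omega>)))) * (pb 0 (fst (snd (snd (snd \<omega>)))) (fst (snd (snd \<omega>))) - pb 1 (fst (snd (snd (snd \<omega>)))) (fst (snd (snd \<omega>)))) * pc 1 (fst \<omega>) (fst (snd \<omega>))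 - (pa 0 (snd (snd (snd (snd \<omega>)))) (fst (snd (snd \<omega>))) - pa 1 (snd (snd (snd (snd \<omega>)))) (fst (snd (snd \<omega>)))) * (pb 0 (fst \<omega>) (fst (snd (snd \<omega>))) - pb 1 (fst \<omega>) (fst (snd (snd \<omega>)))) * pc 1 (fst \<omega>) (fst (snd \<omega>)) \<partial>Omega A B G)"
    by (rule lin5[OF gab(4) go(5) go(4) ga(4) gb(4)])
  have N: "0 \<le> (\<integral>\<omega>. (pa 0 (snd (snd (snd (snd \<omega>)))) (fst (snd (snd \<omega>))) - pa 1 (snd (snd (snd (snd \<omega>)))) (fst (snd (snd \<omega>)))) * (pb 0 (fst (snd (snd (snd \<omega>)))) (fst (snd (snd \<omega>))) - pb 1 (fst (snd (snd (snd \<omega>)))) (fst (snd (snd \<omega>)))) * pc 1 (fst \<omega>) (fst (snd \<omega>)) + 2 * (pc 1 (fst \<omega>) (fst (snd \<omega>))) - (pa 0 (fst (snd \<omega>)) (fst (snd (snd \<omega>))) - pa 1 (fst (snd \<omega>)) (fst (snd (snd \<omega>)))) * (pb 0 (fst \<omega>) (fst (snd (snd \<omega>))) - pb 1 (fst \<omega>) (fst (snd (snd \<omega>)))) * pc 1 (fst \<omega>) (fst (snd \<omega>)) - (pa 0 (fst (snd \<omega>)) (fst (snd (snd \<omega>))) - pa 1 (fst (snd \<omega>)) (fst (snd (snd \<omega>)))) * (pb 0 (fst (snd (snd (snd \<omega>)))) (fst (snd (snd \<omega>))) - pb 1 (fst (snd (snd (snd \<omega>)))) (fst (snd (snd \<omega>))))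 * pc 1 (fst \<omega>) (fst (snd \<omega>)) - (pa 0 (snd (snd (snd (snd \<omega>)))) (fst (snd (snd \<omega>))) - pa 1 (snd (snd (snd (snd \<omega>)))) (fst (snd (snd \<omega>)))) * (pb 0 (fst \<omega>) (fst (snd (snd \<omega>))) - pb 1 (fst \<omega>) (fst (snd (snd \<omega>)))) * pc 1 (fst \<omega>) (fst (snd \<omega>)) \<partial>Omega A B G)"
  proof (rule Bochner_Integration.integral_nonneg)
    fix \<omega> assume w: "\<omega> \<in> space (Omega A B G)"
    have sp: "(fst \<omega>) \<in> space A" "(fst (snd \<omega>)) \<in> space B" "(fst (snd (snd \<omega>))) \<in> space G" "(fst (snd (snd (snd \<omega>)))) \<in> space A" "(snd (snd (snd (snd \<omega>)))) \<in> space B"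
      using w unfolding Omega_def by (auto simp: space_pair_measure)
    have c0: "0 \<le> pc 1 (fst \<omega>) (fst (snd \<omega>))" using assms(11)[of 1, OF _ sp(1,2)] by simp
    have "0 \<le> (pc 1 (fst \<omega>) (fst (snd \<omega>))) * ((pa 0 (snd (snd (snd (snd \<omega>)))) (fst (snd (snd \<omega>))) - pa 1 (snd (snd (snd (snd \<omega>)))) (fst (snd (snd \<omega>)))) * (pb 0 (fst (snd (snd (snd \<omega>)))) (fst (snd (snd \<omega>))) - pb 1 (fst (snd (snd (snd \<omega>)))) (fst (snd (snd \<omega>)))) + 2 - (pa 0 (fst (snd \<omega>)) (fst (snd (snd \<omega>))) - pa 1 (fst (snd \<omega>)) (fst (snd (snd \<omega>)))) * (pb 0 (fst \<omega>) (fst (snd (snd \<omega>))) - pb 1 (fst \<omega>) (fst (snd (snd \<omega>)))) - (pa 0 (snd (snd (snd (snd \<omega>)))) (fst (snd (snd \<omega>))) - pa 1 (snd (snd (snd (snd \<omega>)))) (fst (snd (snd \<omega>)))) * (pb 0 (fst \<omega>) (fst (snd (snd \<omega>))) - pb 1 (fst \<omega>) (fst (snd (snd \<omega>)))) - (pa 0 (fst (snd \<omega>)) (fst (snd (snd \<omega>))) - pa 1 (fst (snd \<omega>)) (fst (snd (snd \<omega>)))) * (pb 0 (fst (snd (snd (snd \<omega>)))) (fst (snd (snd \<omega>))) - pb 1 (fst (snd (snd (snd \<omega>)))) (fst (snd (snd \<omega>)))))"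
      by (rule chsh[OF bA[OF sp(2,3)] bA[OF sp(5,3)] bB[OF sp(1,3)] bB[OF sp(4,3)] c0])
    then show "0 \<le> (pa 0 (snd (snd (snd (snd \<omega>)))) (fst (snd (snd \<omega>))) - pa 1 (snd (snd (snd (snd \<omega>)))) (fst (snd (snd \<omega>)))) * (pb 0 (fst (snd (snd (snd \<omega>)))) (fst (snd (snd \<omega>))) - pb 1 (fst (snd (snd (snd \<omega>)))) (fst (snd (snd \<omega>)))) * pc 1 (fst \<omega>) (fst (snd \<omega>)) + 2 * (pc 1 (fst \<omega>) (fst (snd \<omega>))) - (pa 0 (fst (snd \<omega>)) (fst (snd (snd \<omega>))) - pa 1 (fst (snd \<omega>)) (fst (snd (snd \<omega>)))) * (pb 0 (fst \<omega>) (fst (snd (snd \<omega>))) - pb 1 (fst \<omega>) (fst (snd (snd \<omega>)))) * pc 1 (fst \<omega>) (fst (snd \<omega>)) - (pa 0 (fst (snd \<omega>)) (fst (snd (snd \<omega>))) - pa 1 (fst (snd \<omega>)) (fst (snd (snd \<omega>)))) * (pb 0 (fst (snd (snd (snd \<omega>)))) (fst (snd (snd \<omega>))) - pb 1 (fst (snd (snd (snd \<omega>)))) (fst (snd (snd \<omega>)))) * pc 1 (fst \<omega>) (fst (snd \<omega>)) - (pa 0 (snd (snd (snd (snd \<omega>)))) (fst (snd (snd \<omega>))) - pa 1 (snd (snd (snd (snd \<omega>)))) (fst (snd (snd \<omega>)))) * (pb 0 (fst \<omega>) (fst (snd (snd \<omega>))) - pb 1 (fst \<omega>) (fst (snd (snd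 \<omega>)))) * pc 1 (fst \<omega>) (fst (snd \<omega>))"
      by (simp add: algebra_simps)
  qed
  have e1: "eq_c1 (Pobs A B G pa pb pc) - neq_c1 (Pobs A B G pa pb pc) = (\<integral>\<omega>. (pa 0 (fst (snd \<omega>)) (fst (snd (snd \<omega>))) - pa 1 (fst (snd \<omega>)) (fst (snd (snd \<omega>)))) * (pb 0 (fst \<omega>) (fst (snd (snd \<omega>))) - pb 1 (fst \<omega>) (fst (snd (snd \<omega>)))) * pc 1 (fst \<omega>) (fst (snd \<omega>)) \<partial>Omega A B G)" by (rule go(1))
  have e2: "eq_c1 (Pint_beta A B G pa pb pc) - neq_c1 (Pint_beta A B G pa pb pc) = (\<integral>\<omega>. (pa 0 (snd (snd (snd (snd \<omega>)))) (fst (snd (snd \<omega>))) - pa 1 (snd (snd (snd (snd \<omega>)))) (fst (snd (snd \<omega>)))) * (pb 0 (fst \<omega>) (fst (snd (snd \<omega>))) - pb 1 (fst \<omega>) (fst (snd (snd \<omega>)))) * pc 1 (fst \<omega>) (fst (snd \<omega>)) \<partial>Omega A B G)" by (rule gb(1))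
  have e3: "eq_c1 (Pint_alpha A B G pa pb pc) - neq_c1 (Pint_alpha A B G pa pb pc) = (\<integral>\<omega>. (pa 0 (fst (snd \<omega>)) (fst (snd (snd \<omega>))) - pa 1 (fst (snd \<omega>)) (fst (snd (snd \<omega>)))) * (pb 0 (fst (snd (snd (snd \<omega>)))) (fst (snd (snd \<omega>))) - pb 1 (fst (snd (snd (snd \<omega>)))) (fst (snd (snd \<omega>)))) * pc 1 (fst \<omega>) (fst (snd \<omega>)) \<partial>Omega A B G)" by (rule ga(1))
  have e4: "eq_ab (Pint_alphabeta A B G pa pb pc) - neq_ab (Pint_alphabeta A B G pa pb pc) = (\<integral>\<omega>. (pa 0 (snd (snd (snd (snd \<omega>)))) (fst (snd (snd \<omega>))) - pa 1 (snd (snd (snd (snd \<omega>)))) (fst (snd (snd \<omega>)))) * (pb 0 (fst (snd (snd (snd \<omega>)))) (fst (snd (snd \<omega>))) - pb 1 (fst (snd (snd (snd \<omega>)))) (fst (snd (snd \<omega>)))) \<partial>Omega A B G)" by (rule gab(2))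
  have e5: "c1 (Pobs A B G pa pb pc) = (\<integral>\<omega>. pc 1 (fst \<omega>) (fst (snd \<omega>)) \<partial>Omega A B G)" by (rule go(3))
  show ?thesis
    unfolding Let_def e1 e2 e3 e4 e5 KK L by (rule N)
qed

end
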